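(* For all $n,d\in\mathbb N$, $$\mathbf c_n(\ell_\infty^d(\mathbb C))\ge\frac12\sqrt{\frac{d^n}{(24n)^d}}.$$
   Context: For a complex Banach space $X$ and $n\in\mathbb N$, $\mathbf c_n(X)$ is the smallest constant such that for all $\psi_1,\dots,\psi_n\in X^*$, $\|\psi_1\|\cdots\|\psi_n\|\le \mathbf c_n(X)\,\|\psi_1\cdots\psi_n\|$, where $\psi_1\cdots\psi_n$ is the pointwise product and $\|P\|=\sup_{\|x\|=1}|P(x)|$. $\ell_\infty^d(\mathbb C)$ is $\mathbb C^d$ with the sup norm. *)

theory Defs
  imports "HOL-Analysis.Analysis"
begin

text \<open>The space ell_infinity^d(C): vectors are functions from a finite index type 'd
  (with d = CARD('d)) to the complex numbers, equipped with the sup norm.\<close>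

definition supnorm :: "('d::finite \<Rightarrow> complex) \<Rightarrow> real" where
  "supnorm x = Max (range (\<lambda>i. cmod (x i)))"

text \<open>Elements of the dual: complex-linear functionals on C^d (automatically bounded,
  since the space is finite-dimensional).\<close>

definition clinear_functional :: "(('d::finite \<Rightarrow> complex) \<Rightarrow> complex) \<Rightarrow> bool" where
  "clinear_functional \<psi> \<longleftrightarrow>
     (\<forall>x y. \<psi> (\<lambda>i. x i + y i) = \<psi> x + \<psi> y) \<and> (\<forall>c x. \<psi> (\<lambda>i. c * x i) = c * \<psi> x)"

definition polynorm :: "(('d::finite \<Rightarrow> complex) \<Rightarrow> complex) \<Rightarrow> real" where
  "polynorm P = Sup {cmod (P x) | x. supnorm x = 1}"

definition cn_linf :: "'d::finite itself \<Rightarrow> nat \<Rightarrow> real" where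
  "cn_linf _ n = Inf {C. \<forall>\<psi> :: nat \<Rightarrow> ('d \<Rightarrow> complex) \<Rightarrow> complex.
        (\<forall>i<n. clinear_functional (\<psi> i)) \<longrightarrow>
        (\<Prod>i<n. polynorm (\<psi> i)) \<le> C * polynorm (\<lambda>x. \<Prod>i<n. \<psi> i x)}"

end

theory Submission
  imports Defs "HOL-Library.Real_Mod"
begin

lemma supnorm_ge: "cmod (x i) \<le> supnorm x"
  unfolding supnorm_def by (rule Max_ge) auto

lemma supnorm_ex: "\<exists>i. cmod (x i) = supnorm x"
proof -
  have "supnorm x \<in> range (\<lambda>i. cmod (x i))"
    unfolding supnorm_def by (rule Max_in) auto
  then show ?thesis by auto
qed

lemma supnorm_unique:
  assumes "\<And>i. cmod (x i) \<le> s" "cmod (x j) = s"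
  shows "supnorm x = s"
proof -
  obtain i where "cmod (x i) = supnorm x" using supnorm_ex by blast
  then show ?thesis using supnorm_ge[of x j] assms(1)[of i] assms(2) by linarith
qed

lemma polynorm_upper:
  assumes "\<And>x. supnorm x = 1 \<Longrightarrow> cmod (P x) \<le> B" "supnorm y = 1"
  shows "cmod (P y) \<le> polynorm P"
proof -
  have "bdd_above {cmod (P x) | x. supnorm x = 1}"
    by (rule bdd_aboveI[where M=B]) (use assms(1) in blast)
  moreover have "cmod (P y) \<in> {cmod (P x) | x. supnorm x = 1}" using assms(2) by blast
  ultimately show ?thesis unfolding polynorm_def by (rule cSup_upper[rotated])
qed

lemma one_supnorm: "supnorm (\<lambda>i::'d::finite. 1::complex) = 1"
  using supnorm_unique[of "\<lambda>i::'d. 1::complex" 1 undefined] by simp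

lemma polynorm_le:
  assumes "\<And>x. supnorm x = 1 \<Longrightarrow> cmod (P x) \<le> B"
  shows "polynorm P \<le> B"
  unfolding polynorm_def
proof (rule cSup_least)
  show "{cmod (P x) |x. supnorm x = 1} \<noteq> {}" using one_supnorm by blast
qed (use assms in auto)

lemma polynorm_nonneg:
  assumes "\<And>x. supnorm x = 1 \<Longrightarrow> cmod (P x) \<le> B"
  shows "0 \<le> polynorm P"
  by (rule order_trans[OF norm_ge_zero polynorm_upper[OF assms one_supnorm]])

lemma clf_add: "clinear_functional \<psi> \<Longrightarrow> \<psi> (\<lambda>i. x i + y i) = \<psi> x + \<psi> y"
  unfolding clinear_functional_def by blast

lemma clf_mult: "clinear_functional \<psi> \<Longrightarrow> \<psi> (\<lambda>i. c * x i) = c * \<psi> x"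
  unfolding clinear_functional_def by blast

lemma clf_zero: "clinear_functional \<psi> \<Longrightarrow> \<psi> (\<lambda>i. 0) = 0"
  using clf_mult[of \<psi> 0 "\<lambda>i. 0"] by simp

lemma clf_sum:
  assumes "clinear_functional \<psi>" "finite F"
  shows "\<psi> (\<lambda>i. \<Sum>j\<in>F. f j i) = (\<Sum>j\<in>F. \<psi> (f j))"
  using assms(2)
proof (induction F rule: finite_induct)
  case empty then show ?case using clf_zero[OF assms(1)] by simp
next
  case (insert a F)
  have "\<psi> (\<lambda>i. \<Sum>j\<in>insert a F. f j i) = \<psi> (\<lambda>i. f a i + (\<Sum>j\<in>F. f j i))"
    using insert by simp
  also have "\<dots> = \<psi> (f a) + \<psi> (\<lambda>i. \<Sum>j\<in>F. f j i)"
    using clf_add[OF assms(1), of "f a" "\<lambda>i. \<Sum>j\<in>F. f j i"] by simp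
  finally show ?case using insert by simp
qed

lemma clf_repr:
  assumes "clinear_functional \<psi>"
  shows "\<psi> x = (\<Sum>j\<in>UNIV. x j * \<psi> (\<lambda>i. if i = j then 1 else 0))"
proof -
  have pt: "(\<Sum>j\<in>UNIV. x j * (if i = j then 1 else 0)) = x i" for i
  proof -
    have "(\<Sum>j\<in>UNIV. x j * (if i = j then 1 else 0)) = (\<Sum>j\<in>UNIV. if i = j then x j else 0)"
      by (rule sum.cong) auto
    then show ?thesis by simp
  qed
  have "x = (\<lambda>i. \<Sum>j\<in>UNIV. x j * (if i = j then 1 else 0))"
    using pt by presburger
  then have "\<psi> x = \<psi> (\<lambda>i. \<Sum>j\<in>UNIV. x j * (if i = j then 1 else 0))" by simp
  also have "\<dots> = (\<Sum>j\<in>UNIV. \<psi> (\<lambda>i. x j * (if i = j then 1 else 0)))"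
    by (rule clf_sum[OF assms]) simp
  also have "\<dots> = (\<Sum>j\<in>UNIV. x j * \<psi> (\<lambda>i. if i = j then 1 else 0))"
    using clf_mult[OF assms] by simp
  finally show ?thesis .
qed

lemma orth:
  assumes "a < n" "b < n"
  shows "(\<Sum>t<n. cis (2*pi*real a*real t/real n) * cnj (cis (2*pi*real b*real t/real n)))
     = (if a = b then of_nat n else 0)"
proof (cases "a = b")
  case True then show ?thesis by (simp add: cis_cnj cis_mult)
next
  case False
  define z where "z = cis (2*pi*(real a - real b)/real n)"
  have n: "n > 0" using assms by auto
  have eq: "cis (2*pi*real a*real t/real n) * cnj (cis (2*pi*real b*real t/real n)) = z ^ t" for t
    unfolding z_def Complex.DeMoivre by (simp add: cis_cnj cis_mult algebra_simps diff_divide_distrib)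
  have zn: "z ^ n = 1"
  proof -
    have e: "real n * (2*pi*(real a - real b)/real n) = 2 * pi * real_of_int (int a - int b)"
      using n by simp
    have "z ^ n = cis (2 * pi * real_of_int (int a - int b))"
      unfolding z_def Complex.DeMoivre e by simp
    also have "\<dots> = 1" by (rule cis_multiple_2pi) auto
    finally show ?thesis .
  qed
  have z1: "z \<noteq> 1"
  proof
    assume "z = 1"
    then obtain k where k: "2*pi*(real a - real b)/real n = of_int k * (2 * pi)"
      unfolding z_def cis_eq_1_iff by blast
    then have "2*pi*(real a - real b) = 2*pi*(of_int k * real n)" using n by (simp add: field_simps)
    then have "real a - real b = of_int k * real n" using pi_gt_zero
      by (metis mult_cancel_left mult_eq_0_iff pi_neq_zero zero_neq_numeral)
    then have "int a - int b = k * int n"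
      by (metis of_int_eq_iff of_int_mult of_int_of_nat_eq of_int_diff)
    moreover have "\<bar>int a - int b\<bar> < int n" using assms by auto
    ultimately have "k = 0"
    proof (rule_tac ccontr)
      assume e: "int a - int b = k * int n" and l: "\<bar>int a - int b\<bar> < int n" and k0: "k \<noteq> 0"
      have "1 \<le> \<bar>k\<bar>" using k0 by simp
      then have "1 * int n \<le> \<bar>k\<bar> * int n" by (intro mult_right_mono) auto
      then show False using e l by (simp add: abs_mult)
    qed
    then show False using \<open>int a - int b = k * int n\<close> False by simp
  qed
  show ?thesis using False z1 zn by (simp add: eq sum_gp_strict)
qed

definition psiC :: "'d set \<Rightarrow> ('d \<Rightarrow> nat) \<Rightarrow> nat \<Rightarrow> nat \<Rightarrow> ('d::finite \<Rightarrow> complex) \<Rightarrow> complex" where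
  "psiC J g n t x = (\<Sum>j\<in>J. cis (2*pi*real (g j)*real t/real n) * x j)"

lemma psiC_lin: "clinear_functional (psiC J g n t)"
  unfolding clinear_functional_def psiC_def
  by (simp add: algebra_simps sum.distrib sum_distrib_left)

lemma psiC_bound:
  assumes "supnorm x = 1"
  shows "cmod (psiC J g n t x) \<le> card J"
proof -
  have "cmod (psiC J g n t x) \<le> (\<Sum>j\<in>J. cmod (cis (2*pi*real (g j)*real t/real n) * x j))"
    unfolding psiC_def by (rule norm_sum)
  also have "\<dots> = (\<Sum>j\<in>J. cmod (x j))" by (simp add: norm_mult)
  also have "\<dots> \<le> (\<Sum>j\<in>J. (1::real))"
    by (rule sum_mono) (use supnorm_ge[of x] assms in metis)
  finally show ?thesis by simp
qed

lemma psiC_norm: "polynorm (psiC J g n t) = card J"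
proof (rule order_antisym)
  show "polynorm (psiC J g n t) \<le> card J"
    by (rule polynorm_le) (rule psiC_bound)
  define x0 :: "'a \<Rightarrow> complex" where "x0 = (\<lambda>j. cnj (cis (2*pi*real (g j)*real t/real n)))"
  have s: "supnorm x0 = 1"
    by (rule supnorm_unique[where j=undefined]) (simp_all add: x0_def)
  have "psiC J g n t x0 = (\<Sum>j\<in>J. 1)"
    unfolding psiC_def x0_def by (rule sum.cong) (simp_all add: cis_cnj cis_mult)
  then have "real (card J) = cmod (psiC J g n t x0)" by simp
  also have "\<dots> \<le> polynorm (psiC J g n t)"
    by (rule polynorm_upper[OF psiC_bound s])
  finally show "real (card J) \<le> polynorm (psiC J g n t)" .
qed

lemma psiC_sq:
  assumes inj: "inj_on g J" and gJ: "g ` J \<subseteq> {..<n}"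
  shows "(\<Sum>t<n. (cmod (psiC J g n t x))^2) = real n * (\<Sum>j\<in>J. (cmod (x j))^2)"
proof -
  define e where "e j t = cis (2*pi*real (g j)*real t/real n)" for j t
  have "complex_of_real (\<Sum>t<n. (cmod (psiC J g n t x))^2)
      = (\<Sum>t<n. psiC J g n t x * cnj (psiC J g n t x))"
    unfolding of_real_sum by (intro sum.cong refl) (rule complex_norm_square)
  also have "\<dots> = (\<Sum>t<n. \<Sum>j\<in>J. \<Sum>l\<in>J. (x j * cnj (x l)) * (e j t * cnj (e l t)))"
    unfolding psiC_def e_def by (simp add: sum_product algebra_simps)
  also have "\<dots> = (\<Sum>j\<in>J. \<Sum>l\<in>J. (x j * cnj (x l)) * (\<Sum>t<n. e j t * cnj (e l t)))"
    by (simp add: sum.swap[of _ "{..<n}"] sum_distrib_left)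
  also have "\<dots> = (\<Sum>j\<in>J. \<Sum>l\<in>J. (x j * cnj (x l)) * (if j = l then of_nat n else 0))"
  proof (intro sum.cong refl)
    fix j l assume jl: "j \<in> J" "l \<in> J"
    have "(\<Sum>t<n. e j t * cnj (e l t)) = (if g j = g l then of_nat n else 0)"
      unfolding e_def by (rule orth) (use gJ jl in auto)
    also have "\<dots> = (if j = l then of_nat n else 0)"
      using inj jl by (auto dest: inj_onD)
    finally show "(x j * cnj (x l)) * (\<Sum>t<n. e j t * cnj (e l t)) = (x j * cnj (x l)) * (if j = l then of_nat n else 0)"
      by simp
  qed
  also have "\<dots> = (\<Sum>j\<in>J. of_nat n * (x j * cnj (x j)))"
    by (simp add: if_distrib mult.commute cong: if_cong)
  also have "\<dots> = complex_of_real (real n * (\<Sum>j\<in>J. (cmod (x j))^2))"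
    unfolding of_real_mult of_real_sum sum_distrib_left complex_norm_square by simp
  finally show ?thesis using of_real_eq_iff by blast
qed

lemma psiC_prod_bound:
  assumes n: "n \<ge> 1" and inj: "inj_on g J" and gJ: "g ` J \<subseteq> {..<n}" and x: "supnorm x = 1"
  shows "cmod (\<Prod>t<n. psiC J g n t x) \<le> sqrt (card J) ^ n"
proof -
  define u where "u t = (cmod (psiC J g n t x))^2" for t
  have u0: "\<And>t. 0 \<le> u t" unfolding u_def by simp
  have am: "(\<Prod>t<n. u t) powr (1 / real n) \<le> (\<Sum>t<n. u t / real n)"
  proof -
    have "{..<n} \<noteq> {}" using n lessThan_empty_iff by (metis not_one_le_zero)
    then have "(\<Prod>t<n. u t) powr (1 / real (card {..<n})) \<le> (\<Sum>t<n. u t / real (card {..<n}))"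
      using arith_geom_mean[of "{..<n}" u] u0 by blast
    then show ?thesis by simp
  qed
  have "(\<Sum>t<n. u t / real n) = (\<Sum>t<n. u t) / real n" by (simp add: sum_divide_distrib)
  also have "\<dots> = (\<Sum>j\<in>J. (cmod (x j))^2)"
    unfolding u_def psiC_sq[OF inj gJ] using n by simp
  also have "\<dots> \<le> (\<Sum>j\<in>J. 1)"
  proof (rule sum_mono)
    fix j
    have "cmod (x j) \<le> 1" using supnorm_ge[of x j] x by simp
    then show "(cmod (x j))^2 \<le> 1" by (simp add: power_le_one)
  qed
  finally have A: "(\<Prod>t<n. u t) powr (1 / real n) \<le> real (card J)" using am by simp
  have P0: "0 \<le> (\<Prod>t<n. u t)" using u0 by (simp add: prod_nonneg)
  have "(\<Prod>t<n. u t) = ((\<Prod>t<n. u t) powr (1 / real n)) ^ n"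
  proof (cases "(\<Prod>t<n. u t) = 0")
    case True then show ?thesis using n by (simp only: True powr_0) (simp add: power_0_left)
  next
    case False
    then have pos: "0 < (\<Prod>t<n. u t) powr (1 / real n)" using P0 by simp
    have "((\<Prod>t<n. u t) powr (1 / real n)) ^ n = ((\<Prod>t<n. u t) powr (1 / real n)) powr real n"
      using powr_realpow[OF pos] by simp
    also have "\<dots> = (\<Prod>t<n. u t)" using n P0 by (simp add: powr_powr)
    finally show ?thesis by simp
  qed
  also have "\<dots> \<le> real (card J) ^ n"
    by (rule power_mono[OF A]) simp
  finally have B: "(\<Prod>t<n. u t) \<le> real (card J) ^ n" .
  have "(cmod (\<Prod>t<n. psiC J g n t x))^2 = (\<Prod>t<n. u t)"
    unfolding u_def by (simp add: prod_norm[symmetric] power_mult_distrib prod_power_distrib)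
  then have "cmod (\<Prod>t<n. psiC J g n t x) \<le> sqrt (real (card J) ^ n)"
    using B by (intro real_le_rsqrt) simp
  then show ?thesis by (simp add: real_sqrt_power)
qed

lemma lower_from_J:
  fixes J :: "'d::finite set" and g :: "'d \<Rightarrow> nat"
  assumes n: "n \<ge> 1" and J: "J \<noteq> {}" and inj: "inj_on g J" and gJ: "g ` J \<subseteq> {..<n}"
    and C: "\<forall>\<psi> :: nat \<Rightarrow> ('d \<Rightarrow> complex) \<Rightarrow> complex.
        (\<forall>i<n. clinear_functional (\<psi> i)) \<longrightarrow>
        (\<Prod>i<n. polynorm (\<psi> i)) \<le> C * polynorm (\<lambda>x. \<Prod>i<n. \<psi> i x)"
  shows "sqrt (card J) ^ n \<le> C"
proof -
  define pp where "pp = polynorm (\<lambda>x. \<Prod>t<n. psiC J g n t x)"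
  have "(\<Prod>t<n. polynorm (psiC J g n t)) \<le> C * pp"
    using C[rule_format, of "\<lambda>t. psiC J g n t"] psiC_lin unfolding pp_def by blast
  then have H: "real (card J) ^ n \<le> C * pp" by (simp add: psiC_norm)
  define s where "s = sqrt (card J) ^ n"
  have k1: "1 \<le> real (card J)" using J by (simp add: Suc_leI card_gt_0_iff)
  have s1: "1 \<le> s" unfolding s_def using k1 by (simp add: one_le_power)
  have ss0: "(sqrt (card J) ^ n)^2 = (sqrt (card J) ^ 2) ^ n"
    by (metis power_mult mult.commute)
  have ss: "s^2 = real (card J) ^ n" unfolding s_def ss0 by simp
  have bnd: "\<And>x. supnorm x = 1 \<Longrightarrow> cmod (\<Prod>t<n. psiC J g n t x) \<le> s"
    unfolding s_def by (rule psiC_prod_bound[OF n inj gJ])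
  have pp0: "0 \<le> pp" unfolding pp_def by (rule polynorm_nonneg[OF bnd])
  have pps: "pp \<le> s" unfolding pp_def by (rule polynorm_le[OF bnd])
  have C0: "C > 0"
  proof (rule ccontr)
    assume "\<not> C > 0"
    then have "C * pp \<le> 0" using pp0 by (simp add: mult_nonpos_nonneg)
    then show False using H k1 by (smt (verit) one_le_power)
  qed
  have "C * pp \<le> C * s" using mult_left_mono[OF pps, of C] C0 by simp
  then have "s^2 \<le> C * s" using H ss by simp
  then have "s * s \<le> C * s" by (simp add: power2_eq_square)
  then have "s \<le> C" using s1 by simp
  then show ?thesis unfolding s_def .
qed

lemma good_point:
  fixes a :: "nat \<Rightarrow> 'd::finite \<Rightarrow> complex" and M :: "nat \<Rightarrow> real" and m :: "nat \<Rightarrow> 'd"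
  assumes n: "n \<ge> 1" and Mpos: "\<forall>i<n. M i > 0" and am: "\<forall>i<n. cmod (a i (m i)) = M i"
  shows "\<exists>x. supnorm x = 1 \<and> (\<forall>i<n. M i / (2 * real n) \<le> cmod (\<Sum>j\<in>UNIV. x j * a i j))"
proof -
  define f where "f i x = (\<Sum>j\<in>UNIV. x j * a i j)" for i and x :: "'d \<Rightarrow> complex"
  define V where "V = (\<lambda>k. complex_of_real (real k / real n)) ` {..n}"
  define G where "G = PiE (UNIV::'d set) (\<lambda>_. V)"
  have npos: "real n > 0" using n by simp
  have injV: "inj_on (\<lambda>k. complex_of_real (real k / real n)) {..n}"
    using npos by (auto simp: inj_on_def)
  have cV: "card V = n + 1" unfolding V_def using card_image[OF injV] by simp
  have fV: "finite V" unfolding V_def by simp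
  have fG: "finite G" unfolding G_def using fV by (simp add: finite_PiE)
  have cG: "card G = (n+1) ^ CARD('d)" unfolding G_def using cV by (simp add: card_PiE)
  have cGpos: "card G > 0" using cG by simp
  have V_le1: "v \<in> V \<Longrightarrow> cmod v \<le> 1" for v
    unfolding V_def using npos by (auto simp: norm_divide divide_le_eq_1)
  define Bad where "Bad i = {x\<in>G. cmod (f i x) < M i / (2 * real n)}" for i
  have cb: "card (Bad i) * (n+1) \<le> card G" if i: "i < n" for i
  proof -
    define mm where "mm = m i"
    define H where "H = (\<lambda>x. x(mm:=0)) ` G"
    have bij: "bij_betw (\<lambda>x. (x(mm:=0), x mm)) G (H \<times> V)"
    proof (rule bij_betw_imageI)
      show "inj_on (\<lambda>x. (x(mm:=0), x mm)) G"
      proof (rule inj_onI)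
        fix x y assume "(x(mm:=0), x mm) = (y(mm:=0), y mm)"
        then have "x(mm:=0) = y(mm:=0)" "x mm = y mm" by auto
        then show "x = y" by (metis fun_upd_triv fun_upd_upd)
      qed
      show "(\<lambda>x. (x(mm:=0), x mm)) ` G = H \<times> V"
      proof
        show "(\<lambda>x. (x(mm:=0), x mm)) ` G \<subseteq> H \<times> V"
          unfolding H_def G_def by (auto simp: PiE_iff)
        show "H \<times> V \<subseteq> (\<lambda>x. (x(mm:=0), x mm)) ` G"
        proof
          fix p assume "p \<in> H \<times> V"
          then obtain x v where x: "x \<in> G" and v: "v \<in> V" and p: "p = (x(mm:=0), v)"
            unfolding H_def by auto
          have "x(mm:=v) \<in> G" using x v unfolding G_def by (auto simp: PiE_iff)
          moreover have "p = ((x(mm:=v))(mm:=0), (x(mm:=v)) mm)" using p by simp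
          ultimately show "p \<in> (\<lambda>x. (x(mm:=0), x mm)) ` G" by blast
        qed
      qed
    qed
    have fH: "finite H" unfolding H_def using fG by simp
    have cG': "card G = card H * (n+1)"
      using bij_betw_same_card[OF bij] cV by (simp add: card_cartesian_product)
    have injB: "inj_on (\<lambda>x. x(mm:=0)) (Bad i)"
    proof (rule inj_onI)
      fix x y assume xB: "x \<in> Bad i" and yB: "y \<in> Bad i" and eq: "x(mm:=0) = y(mm:=0)"
      have oth: "\<And>k. k \<noteq> mm \<Longrightarrow> x k = y k" using eq by (metis fun_upd_other)
      have "f i x - f i y = (\<Sum>j\<in>UNIV. (x j - y j) * a i j)"
        unfolding f_def by (simp add: sum_subtractf algebra_simps)
      also have "\<dots> = (\<Sum>j\<in>UNIV. if j = mm then (x mm - y mm) * a i mm else 0)"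
        by (rule sum.cong) (auto simp: oth)
      also have "\<dots> = (x mm - y mm) * a i mm" by simp
      finally have d: "f i x - f i y = (x mm - y mm) * a i mm" .
      have "cmod (f i x - f i y) \<le> cmod (f i x) + cmod (f i y)" by (rule norm_triangle_ineq4)
      also have "\<dots> < M i / (2 * real n) + M i / (2 * real n)"
        using xB yB unfolding Bad_def by (intro add_strict_mono) auto
      also have "\<dots> = M i / real n" by simp
      finally have "cmod (x mm - y mm) * M i < M i / real n"
        using d am i unfolding mm_def by (simp add: norm_mult)
      then have lt: "cmod (x mm - y mm) < 1 / real n"
        using Mpos i by (simp add: field_simps)
      have "x mm \<in> V" "y mm \<in> V" using xB yB unfolding Bad_def G_def by (auto simp: PiE_iff)
      then obtain k l where k: "k \<le> n" "x mm = complex_of_real (real k / real n)"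
        and l: "l \<le> n" "y mm = complex_of_real (real l / real n)" unfolding V_def by auto
      have "x mm - y mm = complex_of_real ((real k - real l) / real n)"
        using k l by (simp add: diff_divide_distrib)
      then have "cmod (x mm - y mm) = \<bar>(real k - real l) / real n\<bar>" by (simp only: norm_of_real)
      then have "\<bar>real k - real l\<bar> / real n < 1 / real n" using lt npos by simp
      then have "\<bar>real k - real l\<bar> < 1" using npos by (simp add: divide_strict_right_mono_neg field_simps)
      then have "k = l" by linarith
      then have "x mm = y mm" using k l by simp
      then show "x = y" using eq by (metis fun_upd_triv fun_upd_upd)
    qed
    have "(\<lambda>x. x(mm:=0)) ` Bad i \<subseteq> H" unfolding H_def Bad_def by auto
    then have "card (Bad i) \<le> card H"
      using card_inj_on_le[OF injB _ fH] by blast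
    then have "card (Bad i) * (n+1) \<le> card H * (n+1)" by (rule mult_right_mono) simp
    then show ?thesis using cG' by simp
  qed
  have "card (\<Union>i<n. Bad i) \<le> (\<Sum>i<n. card (Bad i))" by (rule card_UN_le) simp
  then have "card (\<Union>i<n. Bad i) * (n+1) \<le> (\<Sum>i<n. card (Bad i)) * (n+1)"
    by (rule mult_right_mono) simp
  also have "\<dots> = (\<Sum>i<n. card (Bad i) * (n+1))"
    by (rule sum_distrib_right)
  also have "\<dots> \<le> (\<Sum>i<n. card G)" by (rule sum_mono) (use cb in auto)
  also have "\<dots> = n * card G" by simp
  also have "\<dots> < card G * (n+1)" using cGpos by simp
  finally have "card (\<Union>i<n. Bad i) * (n+1) < card G * (n+1)" .
  then have "card (\<Union>i<n. Bad i) < card G" using mult_less_cancel2 by blast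
  then have "\<not> G \<subseteq> (\<Union>i<n. Bad i)"
  proof (intro notI)
    assume sub: "G \<subseteq> (\<Union>i<n. Bad i)"
    have "finite (\<Union>i<n. Bad i)" by (rule finite_subset[OF _ fG]) (auto simp: Bad_def)
    then have "card G \<le> card (\<Union>i<n. Bad i)" using sub by (rule card_mono)
    then show False using \<open>card (\<Union>i<n. Bad i) < card G\<close> by simp
  qed
  then obtain x where xG: "x \<in> G" and xnB: "\<And>i. i < n \<Longrightarrow> x \<notin> Bad i" by blast
  have good: "M i / (2 * real n) \<le> cmod (f i x)" if "i < n" for i
    using xnB[OF that] xG unfolding Bad_def by auto
  have x1: "cmod (x j) \<le> 1" for j using xG V_le1 unfolding G_def by (auto simp: PiE_iff)
  define s where "s = supnorm x"
  have s1: "s \<le> 1" unfolding s_def using supnorm_ex[of x] x1 by metis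
  have spos: "s > 0"
  proof (rule ccontr)
    assume "\<not> s > 0"
    then have "\<And>j. x j = 0" using supnorm_ge[of x] unfolding s_def
      by (metis norm_le_zero_iff order_trans not_less)
    then have "f 0 x = 0" unfolding f_def by simp
    moreover have "M 0 / (2 * real n) > 0" using Mpos n npos by simp
    ultimately show False using good[of 0] n by simp
  qed
  define y where "y = (\<lambda>j. complex_of_real (1 / s) * x j)"
  obtain j0 where j0: "cmod (x j0) = s" using supnorm_ex[of x] unfolding s_def by blast
  have sy: "supnorm y = 1"
  proof (rule supnorm_unique[where j=j0])
    fix i
    show "cmod (y i) \<le> 1" unfolding y_def using supnorm_ge[of x i] spos
      by (simp add: norm_mult norm_divide s_def divide_le_eq_1)
    show "cmod (y j0) = 1" unfolding y_def using j0 spos by (simp add: norm_mult norm_divide)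
  qed
  have "M i / (2 * real n) \<le> cmod (\<Sum>j\<in>UNIV. y j * a i j)" if i: "i < n" for i
  proof -
    have "(\<Sum>j\<in>UNIV. y j * a i j) = complex_of_real (1 / s) * f i x"
      unfolding y_def f_def by (simp add: sum_distrib_left mult.assoc)
    then have "cmod (\<Sum>j\<in>UNIV. y j * a i j) = cmod (f i x) / s"
      using spos by (simp add: norm_mult norm_divide)
    moreover have "cmod (f i x) \<le> cmod (f i x) / s"
      using spos s1 by (simp add: le_divide_eq mult_left_le)
    ultimately show ?thesis using good[OF i] by simp
  qed
  then show ?thesis using sy by blast
qed

lemma upper_bound:
  fixes \<psi> :: "nat \<Rightarrow> ('d::finite \<Rightarrow> complex) \<Rightarrow> complex"
  assumes n: "n \<ge> 1" and lin: "\<forall>i<n. clinear_functional (\<psi> i)"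
  shows "(\<Prod>i<n. polynorm (\<psi> i)) \<le> (2 * real n * real CARD('d)) ^ n * polynorm (\<lambda>x. \<Prod>i<n. \<psi> i x)"
proof -
  define D where "D = real CARD('d)"
  define a where "a i j = \<psi> i (\<lambda>k. if k = j then 1 else 0)" for i j
  define M where "M i = Max (range (\<lambda>j. cmod (a i j)))" for i
  have rep: "\<psi> i x = (\<Sum>j\<in>UNIV. x j * a i j)" if "i < n" for i x
    unfolding a_def using clf_repr lin that by blast
  have Mge: "cmod (a i j) \<le> M i" for i j unfolding M_def by (rule Max_ge) auto
  have Mex: "\<exists>j. cmod (a i j) = M i" for i
  proof -
    have "M i \<in> range (\<lambda>j. cmod (a i j))" unfolding M_def by (rule Max_in) auto
    then show ?thesis by auto
  qed
  define m where "m i = (SOME j. cmod (a i j) = M i)" for i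
  have am: "cmod (a i (m i)) = M i" for i unfolding m_def using Mex[of i] by (rule someI_ex)
  have M0: "0 \<le> M i" for i using Mge[of i] norm_ge_zero order_trans by blast
  have fbound: "cmod (\<Sum>j\<in>UNIV. x j * a i j) \<le> D * M i" if "supnorm x = 1" for i x
  proof -
    have "cmod (\<Sum>j\<in>UNIV. x j * a i j) \<le> (\<Sum>j\<in>UNIV. cmod (x j * a i j))" by (rule norm_sum)
    also have "\<dots> \<le> (\<Sum>j\<in>(UNIV::'d set). M i)"
    proof (rule sum_mono)
      fix j
      have "cmod (x j) \<le> 1" using supnorm_ge[of x j] that by simp
      then have "cmod (x j) * cmod (a i j) \<le> 1 * M i"
        using Mge[of i j] by (intro mult_mono) auto
      then show "cmod (x j * a i j) \<le> M i" by (simp add: norm_mult)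
    qed
    also have "\<dots> = D * M i" unfolding D_def by simp
    finally show ?thesis .
  qed
  have pb: "cmod (\<psi> i x) \<le> D * M i" if "i < n" "supnorm x = 1" for i x
    using fbound[OF that(2)] rep[OF that(1)] by simp
  have pn: "polynorm (\<psi> i) \<le> D * M i" if "i < n" for i
    by (rule polynorm_le) (rule pb[OF that])
  have pn0: "0 \<le> polynorm (\<psi> i)" if "i < n" for i
    by (rule polynorm_nonneg) (rule pb[OF that])
  have Pb: "cmod (\<Prod>i<n. \<psi> i x) \<le> (\<Prod>i<n. D * M i)" if "supnorm x = 1" for x
  proof -
    have "cmod (\<Prod>i<n. \<psi> i x) = (\<Prod>i<n. cmod (\<psi> i x))" by (simp add: prod_norm)
    also have "\<dots> \<le> (\<Prod>i<n. D * M i)"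
      by (rule prod_mono) (use pb that in auto)
    finally show ?thesis .
  qed
  have PP0: "0 \<le> polynorm (\<lambda>x. \<Prod>i<n. \<psi> i x)" by (rule polynorm_nonneg) (rule Pb)
  have "(\<Prod>i<n. polynorm (\<psi> i)) \<le> (\<Prod>i<n. D * M i)"
    by (rule prod_mono) (use pn pn0 in auto)
  also have "\<dots> \<le> (2 * real n * D) ^ n * polynorm (\<lambda>x. \<Prod>i<n. \<psi> i x)"
  proof (cases "\<exists>i<n. M i = 0")
    case True
    then have "(\<Prod>i<n. D * M i) = 0" by (metis finite_lessThan lessThan_iff mult_zero_right prod_zero_iff)
    moreover have "0 \<le> (2 * real n * D) ^ n * polynorm (\<lambda>x. \<Prod>i<n. \<psi> i x)"
      using PP0 by (intro mult_nonneg_nonneg) (simp_all add: D_def)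
    ultimately show ?thesis by linarith
  next
    case False
    then have Mpos: "\<forall>i<n. M i > 0" using M0 by (metis order_le_neq_trans)
    obtain y where y: "supnorm y = 1" and gy: "\<forall>i<n. M i / (2 * real n) \<le> cmod (\<Sum>j\<in>UNIV. y j * a i j)"
      using good_point[OF n Mpos, of a m] am by blast
    have npos: "real n > 0" using n by simp
    have D0: "0 \<le> 2 * real n * D" by (simp add: D_def)
    have "(\<Prod>i<n. D * M i) = (\<Prod>i<n. (2 * real n * D) * (M i / (2 * real n)))"
      using npos by (intro prod.cong) auto
    also have "\<dots> = (2 * real n * D) ^ n * (\<Prod>i<n. M i / (2 * real n))"
      by (subst prod.distrib, subst prod_constant, subst card_lessThan, rule refl)
    also have "\<dots> \<le> (2 * real n * D) ^ n * (\<Prod>i<n. cmod (\<psi> i y))"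
    proof (rule mult_left_mono)
      show "(\<Prod>i<n. M i / (2 * real n)) \<le> (\<Prod>i<n. cmod (\<psi> i y))"
        by (rule prod_mono) (use gy rep M0 npos in auto)
    qed (rule zero_le_power[OF D0])
    also have "\<dots> = (2 * real n * D) ^ n * cmod (\<Prod>i<n. \<psi> i y)" by (simp add: prod_norm)
    also have "\<dots> \<le> (2 * real n * D) ^ n * polynorm (\<lambda>x. \<Prod>i<n. \<psi> i x)"
      by (rule mult_left_mono[OF polynorm_upper[OF Pb y]]) (assumption | rule zero_le_power[OF D0])+
    finally show ?thesis .
  qed
  finally show ?thesis unfolding D_def .
qed

lemma ineq_small:
  fixes n d :: nat
  assumes "1 \<le> n" "n \<le> d"
  shows "real d ^ n \<le> (3 * real n) ^ d"
proof -
  have np: "real n > 0" using assms by simp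
  have "real d / real n \<le> exp (real d / real n - 1)"
    using exp_ge_add_one_self[of "real d / real n - 1"] by simp
  then have "(real d / real n) ^ n \<le> exp (real d / real n - 1) ^ n"
    by (rule power_mono) (simp)
  also have "\<dots> = exp (real n * (real d / real n - 1))" by (simp add: exp_of_nat_mult)
  also have "\<dots> = exp (real d - real n)" using np by (simp add: algebra_simps)
  also have "\<dots> \<le> exp (real d)" by simp
  also have "\<dots> = exp 1 ^ d" by (simp add: exp_of_nat_mult[symmetric])
  also have "\<dots> \<le> 3 ^ d" by (rule power_mono[OF exp_le]) simp
  finally have A: "(real d / real n) ^ n \<le> 3 ^ d" .
  have B: "real n ^ n \<le> real n ^ d" using assms by (intro power_increasing) auto
  have "real d ^ n = (real d / real n) ^ n * real n ^ n" using np by (simp add: power_divide)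
  also have "\<dots> \<le> 3 ^ d * real n ^ d"
    by (rule mult_mono[OF A B]) auto
  also have "\<dots> = (3 * real n) ^ d" by (simp add: power_mult_distrib)
  finally show ?thesis .
qed

theorem proposition3p1:
  fixes n :: nat
  assumes "n \<ge> 1"
  shows "cn_linf TYPE('d::finite) n \<ge>
           1/2 * sqrt (real CARD('d) ^ n / (24 * real n) ^ CARD('d))"
proof -
  define S where "S = {C. \<forall>\<psi> :: nat \<Rightarrow> ('d \<Rightarrow> complex) \<Rightarrow> complex.
        (\<forall>i<n. clinear_functional (\<psi> i)) \<longrightarrow>
        (\<Prod>i<n. polynorm (\<psi> i)) \<le> C * polynorm (\<lambda>x. \<Prod>i<n. \<psi> i x)}"
  have cn: "cn_linf TYPE('d) n = Inf S" unfolding cn_linf_def S_def ..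
  have ne: "S \<noteq> {}"
    using upper_bound[OF assms] unfolding S_def by blast
  define L where "L = 1/2 * sqrt (real CARD('d) ^ n / (24 * real n) ^ CARD('d))"
  have np: "real n \<ge> 1" using assms by simp
  have X1: "(24 * real n) ^ CARD('d) \<ge> 1" by (intro one_le_power) (use np in linarith)
  have "L \<le> C" if C: "C \<in> S" for C
  proof (cases "CARD('d) \<le> n")
    case True
    obtain h where h: "bij_betw h (UNIV::'d set) {0..<card (UNIV::'d set)}"
      using ex_bij_betw_finite_nat[of "UNIV::'d set"] by auto
    have inj: "inj_on h UNIV" using h bij_betw_imp_inj_on by blast
    have "h ` UNIV = {0..<CARD('d)}" using h by (simp add: bij_betw_def)
    then have hJ: "h ` UNIV \<subseteq> {..<n}" using True by auto
    have low: "sqrt (card (UNIV::'d set)) ^ n \<le> C"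
      by (rule lower_from_J[OF assms _ inj hJ]) (use C in \<open>simp_all add: S_def\<close>)
    have "real CARD('d) ^ n / (24 * real n) ^ CARD('d) \<le> real CARD('d) ^ n"
      using X1 by (simp add: divide_le_eq mult_le_cancel_left1 order_trans[OF _ mult_right_mono])
    then have "sqrt (real CARD('d) ^ n / (24 * real n) ^ CARD('d)) \<le> sqrt (real CARD('d)) ^ n"
      by (metis real_sqrt_le_mono real_sqrt_power)
    moreover have "0 \<le> sqrt (real CARD('d) ^ n / (24 * real n) ^ CARD('d))" by simp
    ultimately have "L \<le> sqrt (real CARD('d)) ^ n" unfolding L_def by linarith
    then show ?thesis using low by simp
  next
    case False
    have low: "sqrt (card {undefined::'d}) ^ n \<le> C"
      by (rule lower_from_J[OF assms, of "{undefined::'d}" "\<lambda>_. 0"]) (use C assms in \<open>simp_all add: S_def\<close>)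
    have "real CARD('d) ^ n \<le> (3 * real n) ^ CARD('d)"
      using ineq_small[of n "CARD('d)"] False assms by simp
    also have "\<dots> \<le> (24 * real n) ^ CARD('d)" by (rule power_mono) auto
    finally have "real CARD('d) ^ n / (24 * real n) ^ CARD('d) \<le> 1"
      using X1 by simp
    then have "sqrt (real CARD('d) ^ n / (24 * real n) ^ CARD('d)) \<le> 1" by simp
    then have "L \<le> 1" unfolding L_def by linarith
    then show ?thesis using low by simp
  qed
  then have "L \<le> Inf S" using ne by (intro cInf_greatest) auto
  then show ?thesis unfolding cn L_def .
qed

end
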